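(* For positive scores $0<s_1\le s_2\le\dots\le s_n$ and integer budget $B\ge1$, the output $\mathbf h=\mathrm{RAS}(s_1,\dots,s_n;B)$ belongs to $\mathcal A$ and satisfies $\mathbf h\in\arg\min_{\mathbf a\in\mathcal A}\|\mathbf a\odot\mathbf s\|_\infty$.
   Context: $\mathcal A=\{\mathbf a\in\mathbb N^n:\|\mathbf a\|_1=B\}$ ($\mathbb N$ includes $0$); $\odot$ is the entrywise product and $\mathbf e_i$ the $i$-th unit vector. RAS$(s_1,\dots,s_n;B)$ with sorted scores $s_1\le\dots\le s_n$: if $B=1$ return $\mathbf e_1$. Otherwise let $\mathbf a=\mathrm{RAS}(s_1,\dots,s_n;B-1)$; let $r=\min\{i:a_i=0\}$ if $a_n=0$, else $r=n$; let $M=\arg\min_{i\in[r]}\|(\mathbf a+\mathbf e_i)\odot\mathbf s\|_\infty$; choose any $j\in M$ minimizing the cardinality of $\arg\max_{i\in[r]}(a_i+e_{j,i})s_i$; return $\mathbf a+\mathbf e_j$. *)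

theory Defs
  imports Complex_Main
begin

text \<open>Vectors in N^n / R^n are functions on nat; only indices 1..n are used.\<close>

definition unit_vec :: "nat \<Rightarrow> nat \<Rightarrow> nat" where
  "unit_vec j = (\<lambda>i. if i = j then 1 else 0)"

definition emul :: "(nat \<Rightarrow> nat) \<Rightarrow> (nat \<Rightarrow> real) \<Rightarrow> nat \<Rightarrow> real" where
  "emul a s = (\<lambda>i. real (a i) * s i)"

definition linf :: "nat \<Rightarrow> (nat \<Rightarrow> real) \<Rightarrow> real" where
  "linf n x = Max ((\<lambda>i. \<bar>x i\<bar>) ` {1..n})"

definition Aset :: "nat \<Rightarrow> nat \<Rightarrow> (nat \<Rightarrow> nat) set" where
  "Aset n B = {a. (\<forall>i. i \<notin> {1..n} \<longrightarrow> a i = 0) \<and> (\<Sum>i\<in>{1..n}. a i) = B}"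

definition ras_r :: "nat \<Rightarrow> (nat \<Rightarrow> nat) \<Rightarrow> nat" where
  "ras_r n a = (if a n = 0 then (LEAST i. 1 \<le> i \<and> a i = 0) else n)"

definition ras_M :: "(nat \<Rightarrow> real) \<Rightarrow> nat \<Rightarrow> (nat \<Rightarrow> nat) \<Rightarrow> nat set" where
  "ras_M s n a = {j \<in> {1..ras_r n a}. \<forall>k \<in> {1..ras_r n a}.
      linf n (emul (\<lambda>i. a i + unit_vec j i) s) \<le> linf n (emul (\<lambda>i. a i + unit_vec k i) s)}"

definition ras_cnt :: "(nat \<Rightarrow> real) \<Rightarrow> nat \<Rightarrow> (nat \<Rightarrow> nat) \<Rightarrow> nat \<Rightarrow> nat" where
  "ras_cnt s n a j = card {i \<in> {1..ras_r n a}.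
      \<forall>i' \<in> {1..ras_r n a}. real (a i' + unit_vec j i') * s i' \<le> real (a i + unit_vec j i) * s i}"

text \<open>RAS is nondeterministic (any j may be chosen among the tie-breakers), so it is
  modelled as the relation "h is a possible output of RAS(s_1..s_n; B)".\<close>
inductive RAS :: "(nat \<Rightarrow> real) \<Rightarrow> nat \<Rightarrow> nat \<Rightarrow> (nat \<Rightarrow> nat) \<Rightarrow> bool"
  for s :: "nat \<Rightarrow> real" and n :: nat where
  base: "RAS s n 1 (unit_vec 1)"
| step: "\<lbrakk> RAS s n B a; j \<in> ras_M s n a; \<forall>k \<in> ras_M s n a. ras_cnt s n a j \<le> ras_cnt s n a k \<rbrakk>
         \<Longrightarrow> RAS s n (Suc B) (\<lambda>i. a i + unit_vec j i)"

end

theory Submission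
  imports Defs
begin

lemma linf_ge: "k \<in> {1..n} \<Longrightarrow> \<bar>x k\<bar> \<le> linf n x"
  unfolding linf_def by (rule Max_ge) auto

lemma linf_le: "n \<ge> 1 \<Longrightarrow> (\<forall>k\<in>{1..n}. \<bar>x k\<bar> \<le> c) \<Longrightarrow> linf n x \<le> c"
  unfolding linf_def by (subst Max_le_iff) auto

lemma r_props:
  assumes "n \<ge> 1"
  shows "1 \<le> ras_r n a \<and> ras_r n a \<le> n \<and> (a n = 0 \<longrightarrow> a (ras_r n a) = 0)"
proof (cases "a n = 0")
  case True
  have e: "1 \<le> n \<and> a n = 0" using assms True by simp
  have "1 \<le> (LEAST i. 1 \<le> i \<and> a i = 0) \<and> a (LEAST i. 1 \<le> i \<and> a i = 0) = 0"
    using LeastI[of "\<lambda>i. 1 \<le> i \<and> a i = 0", OF e] by simp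
  moreover have "(LEAST i. 1 \<le> i \<and> a i = 0) \<le> n" using Least_le[of "\<lambda>i. 1 \<le> i \<and> a i = 0", OF e] .
  ultimately show ?thesis using True unfolding ras_r_def by simp
next
  case False
  then show ?thesis using assms unfolding ras_r_def by simp
qed

lemma le_mult_nat: "0 < (x::real) \<Longrightarrow> 1 \<le> (m::nat) \<Longrightarrow> x \<le> real m * x"
proof -
  assume "0 < x" "1 \<le> m"
  then have "1 * x \<le> real m * x" by (intro mult_right_mono) auto
  then show ?thesis by simp
qed

lemma sum_unit: "j \<in> {1..n} \<Longrightarrow> (\<Sum>k\<in>{1..n}. unit_vec j k) = 1"
  unfolding unit_vec_def by (simp add: sum.delta')

lemma main:
  assumes "RAS s n B h" and n1: "n \<ge> 1"
    and pos: "\<forall>i \<in> {1..n}. 0 < s i"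
    and mono: "\<forall>i j. 1 \<le> i \<longrightarrow> i \<le> j \<longrightarrow> j \<le> n \<longrightarrow> s i \<le> s j"
  shows "h \<in> Aset n B \<and> (\<forall>b \<in> Aset n B. linf n (emul h s) \<le> linf n (emul b s))"
  using assms(1)
proof (induction rule: RAS.induct)
  case base
  have mem: "unit_vec 1 \<in> Aset n 1"
    using n1 sum_unit[of 1 n] unfolding Aset_def by (auto simp: unit_vec_def)
  have "linf n (emul (unit_vec 1) s) \<le> linf n (emul b s)" if b: "b \<in> Aset n 1" for b
  proof -
    have "\<exists>i\<in>{1..n}. b i \<ge> 1"
    proof (rule ccontr)
      assume "\<not> ?thesis"
      then have "\<forall>i\<in>{1..n}. b i = 0" by auto
      then have "(\<Sum>i\<in>{1..n}. b i) = 0" by simp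
      then show False using b unfolding Aset_def by simp
    qed
    then obtain i where i: "i \<in> {1..n}" "b i \<ge> 1" by blast
    have "s 1 \<le> s i" using mono i by auto
    also have "s i \<le> real (b i) * s i" using i pos le_mult_nat by auto
    also have "\<dots> \<le> linf n (emul b s)" using linf_ge[OF i(1), of "emul b s"] i pos
      unfolding emul_def by auto
    finally have s1: "s 1 \<le> linf n (emul b s)" .
    have "\<forall>k\<in>{1..n}. \<bar>emul (unit_vec 1) s k\<bar> \<le> linf n (emul b s)"
    proof
      fix k assume k: "k \<in> {1..n}"
      show "\<bar>emul (unit_vec 1) s k\<bar> \<le> linf n (emul b s)"
      proof (cases "k = 1")
        case True
        have "0 < s 1" using pos n1 by auto
        then show ?thesis using s1 True unfolding emul_def unit_vec_def by auto
      next
        case False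
        have "0 \<le> linf n (emul b s)" using linf_ge[OF k, of "emul b s"] by linarith
        then show ?thesis using False unfolding emul_def unit_vec_def by auto
      qed
    qed
    then show ?thesis using linf_le[OF n1] by blast
  qed
  then show ?case using mem by blast
next
  case (step B a j)
  let ?r = "ras_r n a"
  have rp: "1 \<le> ?r" "?r \<le> n" "a n = 0 \<longrightarrow> a ?r = 0" using r_props[OF n1, of a] by auto
  have jr: "j \<in> {1..?r}" and jmin: "\<forall>k\<in>{1..?r}. linf n (emul (\<lambda>i. a i + unit_vec j i) s)
      \<le> linf n (emul (\<lambda>i. a i + unit_vec k i) s)"
    using step.hyps(2) unfolding ras_M_def by auto
  have jn: "j \<in> {1..n}" using jr rp by auto
  have aA: "a \<in> Aset n B" and aopt: "\<forall>b \<in> Aset n B. linf n (emul a s) \<le> linf n (emul b s)"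
    using step.IH by auto
  have mem: "(\<lambda>i. a i + unit_vec j i) \<in> Aset n (Suc B)"
  proof -
    have "(\<Sum>i\<in>{1..n}. a i + unit_vec j i) = (\<Sum>i\<in>{1..n}. a i) + (\<Sum>i\<in>{1..n}. unit_vec j i)"
      by (rule sum.distrib)
    then have "(\<Sum>i\<in>{1..n}. a i + unit_vec j i) = Suc B" using aA sum_unit[OF jn]
      unfolding Aset_def by simp
    moreover have "\<forall>i. i \<notin> {1..n} \<longrightarrow> a i + unit_vec j i = 0"
      using aA jn unfolding Aset_def unit_vec_def by auto
    ultimately show ?thesis unfolding Aset_def by simp
  qed
  have "linf n (emul (\<lambda>i. a i + unit_vec j i) s) \<le> linf n (emul b s)"
    if b: "b \<in> Aset n (Suc B)" for b
  proof -
    have "\<exists>i\<in>{1..n}. b i \<ge> a i + 1"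
    proof (rule ccontr)
      assume "\<not> ?thesis"
      then have "\<forall>i\<in>{1..n}. b i \<le> a i" by auto
      then have "(\<Sum>i\<in>{1..n}. b i) \<le> (\<Sum>i\<in>{1..n}. a i)" using sum_mono[of "{1..n}" b a] by blast
      then show False using b aA unfolding Aset_def by simp
    qed
    then obtain i where i: "i \<in> {1..n}" "b i \<ge> a i + 1" by blast
    define b' where "b' = b(i := b i - 1)"
    have fin: "finite {1..n}" by simp
    have "(\<Sum>k\<in>{1..n}. b k) = b i + (\<Sum>k\<in>{1..n}-{i}. b k)"
      using sum.remove[OF fin i(1)] by simp
    moreover have "(\<Sum>k\<in>{1..n}. b' k) = b' i + (\<Sum>k\<in>{1..n}-{i}. b' k)"
      using sum.remove[OF fin i(1)] by simp
    moreover have "(\<Sum>k\<in>{1..n}-{i}. b' k) = (\<Sum>k\<in>{1..n}-{i}. b k)"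
      unfolding b'_def by (rule sum.cong) auto
    ultimately have "(\<Sum>k\<in>{1..n}. b' k) = B" using b i(2) unfolding Aset_def b'_def by auto
    moreover have "\<forall>k. k \<notin> {1..n} \<longrightarrow> b' k = 0" using b i(1) unfolding Aset_def b'_def by auto
    ultimately have b'A: "b' \<in> Aset n B" unfolding Aset_def by simp
    have "linf n (emul b' s) \<le> linf n (emul b s)"
    proof (rule linf_le[OF n1], intro ballI)
      fix k assume k: "k \<in> {1..n}"
      have sk: "0 < s k" using pos k by auto
      have "real (b' k) \<le> real (b k)" unfolding b'_def by auto
      then have "real (b' k) * s k \<le> real (b k) * s k" using sk by (intro mult_right_mono) auto
      then have "\<bar>emul b' s k\<bar> \<le> \<bar>emul b s k\<bar>" using sk unfolding emul_def by auto
      then show "\<bar>emul b' s k\<bar> \<le> linf n (emul b s)" using linf_ge[OF k, of "emul b s"] by linarith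
    qed
    with aopt b'A have L: "linf n (emul a s) \<le> linf n (emul b s)" by fastforce
    have bi: "real (b i) * s i \<le> linf n (emul b s)"
      using linf_ge[OF i(1), of "emul b s"] pos i unfolding emul_def by auto
    have key: "linf n (emul (\<lambda>k. a k + unit_vec m k) s) \<le> linf n (emul b s)"
      if m: "m \<in> {1..n}" "(real (a m) + 1) * s m \<le> linf n (emul b s)" for m
    proof (rule linf_le[OF n1], intro ballI)
      fix k assume k: "k \<in> {1..n}"
      show "\<bar>emul (\<lambda>k. a k + unit_vec m k) s k\<bar> \<le> linf n (emul b s)"
      proof (cases "k = m")
        case True
        have "0 < s m" using pos m by auto
        then have "0 \<le> (real (a m) + 1) * s m" by simp
        then show ?thesis using m True unfolding emul_def unit_vec_def by (simp add: add.commute)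
      next
        case False
        have "\<bar>emul a s k\<bar> \<le> linf n (emul a s)" by (rule linf_ge[OF k])
        then show ?thesis using False L unfolding emul_def unit_vec_def by auto
      qed
    qed
    show ?thesis
    proof (cases "i \<le> ?r")
      case True
      then have "i \<in> {1..?r}" using i by auto
      moreover have "(real (a i) + 1) * s i \<le> linf n (emul b s)"
      proof -
        have si: "0 < s i" using i pos by auto
        have "real (a i) + 1 \<le> real (b i)" using i by linarith
        then have "(real (a i) + 1) * s i \<le> real (b i) * s i" using si
          by (intro mult_right_mono) auto
        then show ?thesis using bi by linarith
      qed
      ultimately show ?thesis using jmin key[OF i(1)] by fastforce
    next
      case False
      then have "?r < n" using i by auto
      then have an: "a n = 0" unfolding ras_r_def by (auto split: if_splits)
      then have ar: "a ?r = 0" using rp by auto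
      have rn: "?r \<in> {1..n}" using rp by auto
      have "s ?r \<le> s i" using mono False rp i by auto
      also have "s i \<le> real (b i) * s i" using i pos le_mult_nat by auto
      finally have "(real (a ?r) + 1) * s ?r \<le> linf n (emul b s)" using ar bi by simp
      then have "linf n (emul (\<lambda>k. a k + unit_vec ?r k) s) \<le> linf n (emul b s)"
        using key[OF rn] by blast
      moreover have "?r \<in> {1..?r}" using rp by auto
      ultimately show ?thesis using jmin by fastforce
    qed
  qed
  then show ?case using mem by blast
qed

theorem lemmaC2:
  fixes s :: "nat \<Rightarrow> real" and n B :: nat and h :: "nat \<Rightarrow> nat"
  assumes "n \<ge> 1"
    and "\<forall>i \<in> {1..n}. 0 < s i"
    and "\<forall>i j. 1 \<le> i \<longrightarrow> i \<le> j \<longrightarrow> j \<le> n \<longrightarrow> s i \<le> s j"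
    and "B \<ge> 1"
    and "RAS s n B h"
  shows "h \<in> Aset n B \<and> (\<forall>a \<in> Aset n B. linf n (emul h s) \<le> linf n (emul a s))"
  using main[OF assms(5,1,2,3)] .

end
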